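(* Let $\{(Y_i,X_i^T)\}_{i=1}^n$ be i.i.d. copies of $(Y,X^T)$, where $Y$ is real-valued and $X$ takes values in a support $\mathcal{X}\subset\mathbb{R}^{\dim X}$, and let $g_0(x)=E[Y\mid X=x]$. Let $\mathbf{A}_0$ be a known linear operator mapping functions on $\mathcal{X}$ to real-valued functions on a set $\mathcal{W}_0$, and $\mathbf{A}_1$ a known linear operator mapping functions on $\mathcal{X}$ to real-valued functions on a set $\mathcal{W}_1$; put $\theta_0=\mathbf{A}_0g_0$. Let $p_{1:k}=(p_1,\dots,p_k)^T$ be functions on $\mathcal{X}$ ($k\ge 2$), assume $E[p_{1:k}(X)p_{1:k}(X)^T]$ is invertible, and let $\bar\beta=E[p_{1:k}(X)p_{1:k}(X)^T]^{-1}E[p_{1:k}(X)Y]$. Assume there are known functions $\delta_0$ on $\mathcal{W}_0$ and $\delta_1$ on $\mathcal{W}_1$ with $|[\mathbf{A}_0(g_0-p_{1:k}^T\bar\beta)](w_0)|\le\delta_0(w_0)$ for all $w_0\in\mathcal{W}_0$ and $|[\mathbf{A}_1(g_0-p_{1:k}^T\bar\beta)](w_1)|\le\delta_1(w_1)$ for all $w_1\in\mathcal{W}_1$. Define $\hat\omega=p_{1:k}(X)\bigl(Y-p_{1:k}(X)^TE_n[p_{1:k}(X)p_{1:k}(X)^T]^{-1}E_n[p_{1:k}(X)Y]\bigr)$ (computed for each observation), let $\eta_1,\dots,\eta_n$ be i.i.d. Rademacher variables independent of the data, and let $cv$ be the $(1-\alpha)$ quantile, conditional on the data, of $\|E_n[\hat\omega\hat\omega^T]^{-1/2}E_n[\eta\hat\omega]\|_\infty$.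 Consider the constraints on $\beta\in\mathbb{R}^k$: (C1) $\|E_n[\hat\omega\hat\omega^T]^{-1/2}E_n[p_{1:k}(X)(Y-p_{1:k}(X)^T\beta)]\|_\infty\le cv$; (C3) $[\mathbf{A}_1p_{1:k}^T](w_1)\beta\le\delta_1(w_1)$ for every $w_1\in\mathcal{W}_1$; and let $CR_\theta$ be the set of functions $\theta:\mathcal{W}_0\to\mathbb{R}$ for which there exists $\beta\in\mathbb{R}^k$ satisfying (C1), (C3), and $|[\mathbf{A}_0p_{1:k}^T](w_0)\beta-\theta(w_0)|\le\delta_0(w_0)$ for every $w_0\in\mathcal{W}_0$. Then for every $w_0\in\mathcal{W}_0$, the projection $\{\theta(w_0):\theta\in CR_\theta\}$ equals the closed interval $$\Bigl[\min_{\beta\ \text{s.t. (C1),(C3)}}[\mathbf{A}_0p_{1:k}^T](w_0)\beta-\delta_0(w_0),\ \max_{\beta\ \text{s.t. (C1),(C3)}}[\mathbf{A}_0p_{1:k}^T](w_0)\beta+\delta_0(w_0)\Bigr].$$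
   Context: $E_n$ denotes the sample mean: $E_n[f(Y,X^T)]=\frac1n\sum_{i=1}^nf(Y_i,X_i^T)$, and $E_n[\eta\hat\omega]=\frac1n\sum_i\eta_i\hat\omega_i$. The notation $[\mathbf{A}_jp_{1:k}^T](w)\beta$ means $[\mathbf{A}_j(p_{1:k}^T\beta)](w)$ for $j=0,1$. $\|\cdot\|_\infty$ is the sup-norm of a vector in $\mathbb{R}^k$. The constraints (C1) and (C3) are linear in $\beta$, so the endpoints are values of linear programs. *)

theory Defs
  imports "HOL-Probability.Probability"
begin

definition En :: "nat \<Rightarrow> (nat \<Rightarrow> real) \<Rightarrow> real" where
  "En n f = (\<Sum>i<n. f i) / real n"

definition lin_op :: "(('x \<Rightarrow> real) \<Rightarrow> ('w \<Rightarrow> real)) \<Rightarrow> bool" where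
  "lin_op A \<longleftrightarrow> (\<forall>a b f g. A (\<lambda>x. a * f x + b * g x) = (\<lambda>w. a * A f w + b * A g w))"

definition sgram :: "nat \<Rightarrow> ('x \<Rightarrow> real^'k) \<Rightarrow> (nat \<Rightarrow> 'x) \<Rightarrow> real^'k^'k" where
  "sgram n p Xs = (\<chi> a b. En n (\<lambda>i. p (Xs i) $ a * p (Xs i) $ b))"

definition smoment :: "nat \<Rightarrow> ('x \<Rightarrow> real^'k) \<Rightarrow> (nat \<Rightarrow> real) \<Rightarrow> (nat \<Rightarrow> 'x) \<Rightarrow> real^'k \<Rightarrow> real^'k" where
  "smoment n p Ys Xs \<beta> = (\<chi> a. En n (\<lambda>i. p (Xs i) $ a * (Ys i - p (Xs i) \<bullet> \<beta>)))"

definition scross :: "nat \<Rightarrow> ('x \<Rightarrow> real^'k) \<Rightarrow> (nat \<Rightarrow> real) \<Rightarrow> (nat \<Rightarrow> 'x) \<Rightarrow> real^'k" where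
  "scross n p Ys Xs = (\<chi> a. En n (\<lambda>i. p (Xs i) $ a * Ys i))"

definition omega_hat :: "nat \<Rightarrow> ('x \<Rightarrow> real^'k) \<Rightarrow> (nat \<Rightarrow> real) \<Rightarrow> (nat \<Rightarrow> 'x) \<Rightarrow> nat \<Rightarrow> real^'k" where
  "omega_hat n p Ys Xs i =
     (Ys i - p (Xs i) \<bullet> (matrix_inv (sgram n p Xs) *v scross n p Ys Xs)) *\<^sub>R p (Xs i)"

definition outer_mean :: "nat \<Rightarrow> (nat \<Rightarrow> real^'k) \<Rightarrow> real^'k^'k" where
  "outer_mean n w = (\<chi> a b. En n (\<lambda>i. w i $ a * w i $ b))"

definition inv_sqrt :: "real^'k^'k \<Rightarrow> real^'k^'k" where
  "inv_sqrt M = (THE S. transpose S = S \<and> (\<forall>x. x \<noteq> 0 \<longrightarrow> 0 < x \<bullet> (S *v x))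
                     \<and> S ** S = matrix_inv M)"

text \<open>Realisations of n i.i.d. Rademacher signs (each equally likely, conditionally on data).\<close>
definition rademacher_signs :: "nat \<Rightarrow> (nat \<Rightarrow> real) set" where
  "rademacher_signs n = PiE {..<n} (\<lambda>_. {-1, 1})"

definition boot_stat :: "nat \<Rightarrow> real^'k^'k \<Rightarrow> (nat \<Rightarrow> real^'k) \<Rightarrow> (nat \<Rightarrow> real) \<Rightarrow> real" where
  "boot_stat n S w \<eta> = infnorm (S *v (\<chi> a. En n (\<lambda>i. \<eta> i * w i $ a)))"

definition cond_quantile :: "nat \<Rightarrow> real \<Rightarrow> ((nat \<Rightarrow> real) \<Rightarrow> real) \<Rightarrow> real" where
  "cond_quantile n \<alpha> T =
     Inf {c. (1 - \<alpha>) * real (card (rademacher_signs n))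
             \<le> real (card {\<eta> \<in> rademacher_signs n. T \<eta> \<le> c})}"

definition crit_val :: "nat \<Rightarrow> real \<Rightarrow> ('x \<Rightarrow> real^'k) \<Rightarrow> (nat \<Rightarrow> real) \<Rightarrow> (nat \<Rightarrow> 'x) \<Rightarrow> real" where
  "crit_val n \<alpha> p Ys Xs =
     cond_quantile n \<alpha>
       (boot_stat n (inv_sqrt (outer_mean n (omega_hat n p Ys Xs))) (omega_hat n p Ys Xs))"

definition feasible ::
  "nat \<Rightarrow> real \<Rightarrow> ('x \<Rightarrow> real^'k) \<Rightarrow> (nat \<Rightarrow> real) \<Rightarrow> (nat \<Rightarrow> 'x)
   \<Rightarrow> (('x \<Rightarrow> real) \<Rightarrow> ('w1 \<Rightarrow> real)) \<Rightarrow> 'w1 set \<Rightarrow> ('w1 \<Rightarrow> real) \<Rightarrow> (real^'k) set" where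
  "feasible n \<alpha> p Ys Xs A1 W1 \<delta>1 =
     {\<beta>. infnorm (inv_sqrt (outer_mean n (omega_hat n p Ys Xs)) *v smoment n p Ys Xs \<beta>)
            \<le> crit_val n \<alpha> p Ys Xs
        \<and> (\<forall>w\<in>W1. A1 (\<lambda>x. p x \<bullet> \<beta>) w \<le> \<delta>1 w)}"

definition CR_theta ::
  "nat \<Rightarrow> real \<Rightarrow> ('x \<Rightarrow> real^'k) \<Rightarrow> (nat \<Rightarrow> real) \<Rightarrow> (nat \<Rightarrow> 'x)
   \<Rightarrow> (('x \<Rightarrow> real) \<Rightarrow> ('w0 \<Rightarrow> real)) \<Rightarrow> 'w0 set \<Rightarrow> ('w0 \<Rightarrow> real)
   \<Rightarrow> (('x \<Rightarrow> real) \<Rightarrow> ('w1 \<Rightarrow> real)) \<Rightarrow> 'w1 set \<Rightarrow> ('w1 \<Rightarrow> real) \<Rightarrow> ('w0 \<Rightarrow> real) set" where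
  "CR_theta n \<alpha> p Ys Xs A0 W0 \<delta>0 A1 W1 \<delta>1 =
     {\<theta>. \<exists>\<beta>\<in>feasible n \<alpha> p Ys Xs A1 W1 \<delta>1.
            \<forall>w\<in>W0. \<bar>A0 (\<lambda>x. p x \<bullet> \<beta>) w - \<theta> w\<bar> \<le> \<delta>0 w}"

end

theory Submission
  imports Defs
begin

lemma En_lin: "En n (\<lambda>i. a * f i + b * g i) = a * En n f + b * En n g"
  unfolding En_def by (simp add: sum.distrib sum_distrib_left add_divide_distrib)

lemma smoment_conv:
  assumes "0 \<le> t" "t \<le> 1"
  shows "smoment n p Ys Xs ((1-t) *\<^sub>R b1 + t *\<^sub>R b2) = (1-t) *\<^sub>R smoment n p Ys Xs b1 + t *\<^sub>R smoment n p Ys Xs b2"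
proof -
  have "\<And>a. En n (\<lambda>i. p (Xs i) $ a * (Ys i - p (Xs i) \<bullet> ((1-t) *\<^sub>R b1 + t *\<^sub>R b2)))
     = (1-t) * En n (\<lambda>i. p (Xs i) $ a * (Ys i - p (Xs i) \<bullet> b1)) + t * En n (\<lambda>i. p (Xs i) $ a * (Ys i - p (Xs i) \<bullet> b2))"
  proof -
    fix a
    have "(\<lambda>i. p (Xs i) $ a * (Ys i - p (Xs i) \<bullet> ((1-t) *\<^sub>R b1 + t *\<^sub>R b2)))
       = (\<lambda>i. (1-t) * (p (Xs i) $ a * (Ys i - p (Xs i) \<bullet> b1)) + t * (p (Xs i) $ a * (Ys i - p (Xs i) \<bullet> b2)))"
      by (rule ext) (simp add: inner_add_right algebra_simps)
    then show "?thesis a" by (simp add: En_lin)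
  qed
  then show ?thesis unfolding smoment_def by (simp add: vec_eq_iff)
qed

lemma lin_op_conv:
  assumes "lin_op A"
  shows "A (\<lambda>x. p x \<bullet> ((1-t) *\<^sub>R b1 + t *\<^sub>R b2)) w = (1-t) * A (\<lambda>x. p x \<bullet> b1) w + t * A (\<lambda>x. p x \<bullet> b2) w"
proof -
  have "(\<lambda>x. p x \<bullet> ((1-t) *\<^sub>R b1 + t *\<^sub>R b2)) = (\<lambda>x. (1-t) * (p x \<bullet> b1) + t * (p x \<bullet> b2))"
    by (rule ext) (simp add: inner_add_right)
  then show ?thesis using assms unfolding lin_op_def by metis
qed

lemma interp_aux:
  fixes a b c :: real assumes "a < b"
  shows "(1 - (c - a) / (b - a)) * a + (c - a) / (b - a) * b = c"
proof -
  have nz: "b - a \<noteq> 0" using assms by auto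
  have g: "(1 - s) * a + s * b = a + s * (b - a)" for s :: real
    by (simp add: algebra_simps)
  have "(1 - (c - a) / (b - a)) * a + (c - a) / (b - a) * b = a + (c - a) / (b - a) * (b - a)"
    by (rule g)
  also have "\<dots> = c" using nz by simp
  finally show ?thesis .
qed

lemma feasible_conv:
  assumes "lin_op A1" "0 \<le> t" "t \<le> 1"
    "b1 \<in> feasible n \<alpha> p Ys Xs A1 W1 \<delta>1" "b2 \<in> feasible n \<alpha> p Ys Xs A1 W1 \<delta>1"
  shows "(1-t) *\<^sub>R b1 + t *\<^sub>R b2 \<in> feasible n \<alpha> p Ys Xs A1 W1 \<delta>1"
proof -
  let ?S = "inv_sqrt (outer_mean n (omega_hat n p Ys Xs))"
  let ?c = "crit_val n \<alpha> p Ys Xs"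
  have h1: "infnorm (?S *v smoment n p Ys Xs b1) \<le> ?c" "infnorm (?S *v smoment n p Ys Xs b2) \<le> ?c"
    and h2: "\<forall>w\<in>W1. A1 (\<lambda>x. p x \<bullet> b1) w \<le> \<delta>1 w" "\<forall>w\<in>W1. A1 (\<lambda>x. p x \<bullet> b2) w \<le> \<delta>1 w"
    using assms(4,5) unfolding feasible_def by auto
  have "?S *v smoment n p Ys Xs ((1-t) *\<^sub>R b1 + t *\<^sub>R b2) = (1-t) *\<^sub>R (?S *v smoment n p Ys Xs b1) + t *\<^sub>R (?S *v smoment n p Ys Xs b2)"
    using assms(2,3) by (simp add: smoment_conv matrix_vector_right_distrib matrix_vector_mult_scaleR)
  hence "infnorm (?S *v smoment n p Ys Xs ((1-t) *\<^sub>R b1 + t *\<^sub>R b2)) \<le> (1-t) * infnorm (?S *v smoment n p Ys Xs b1) + t * infnorm (?S *v smoment n p Ys Xs b2)"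
    using assms(2,3) infnorm_triangle[of "(1-t) *\<^sub>R (?S *v smoment n p Ys Xs b1)" "t *\<^sub>R (?S *v smoment n p Ys Xs b2)"]
    by (simp add: infnorm_mul)
  also have "\<dots> \<le> (1-t) * ?c + t * ?c"
    using assms(2,3) h1 by (intro add_mono mult_left_mono) auto
  finally have c1: "infnorm (?S *v smoment n p Ys Xs ((1-t) *\<^sub>R b1 + t *\<^sub>R b2)) \<le> ?c" by (simp add: algebra_simps)
  have "\<forall>w\<in>W1. A1 (\<lambda>x. p x \<bullet> ((1-t) *\<^sub>R b1 + t *\<^sub>R b2)) w \<le> \<delta>1 w"
  proof
    fix w assume w: "w \<in> W1"
    have "(1-t) * A1 (\<lambda>x. p x \<bullet> b1) w + t * A1 (\<lambda>x. p x \<bullet> b2) w \<le> (1-t) * \<delta>1 w + t * \<delta>1 w"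
      using assms(2,3) h2 w by (intro add_mono mult_left_mono) auto
    then show "A1 (\<lambda>x. p x \<bullet> ((1-t) *\<^sub>R b1 + t *\<^sub>R b2)) w \<le> \<delta>1 w"
      unfolding lin_op_conv[OF assms(1)] by (simp add: algebra_simps)
  qed
  with c1 show ?thesis unfolding feasible_def by auto
qed


theorem theorem1:
  fixes M :: "'a measure"
    and Y :: "'a \<Rightarrow> real" and X :: "'a \<Rightarrow> real^'d"
    and Ys :: "nat \<Rightarrow> 'a \<Rightarrow> real" and Xs :: "nat \<Rightarrow> 'a \<Rightarrow> real^'d"
    and n :: nat and \<alpha> :: real
    and \<X> :: "(real^'d) set"
    and g0 :: "real^'d \<Rightarrow> real"
    and p :: "real^'d \<Rightarrow> real^'k::finite"
    and A0 :: "(real^'d \<Rightarrow> real) \<Rightarrow> ('w0 \<Rightarrow> real)" and W0 :: "'w0 set" and \<delta>0 :: "'w0 \<Rightarrow> real"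
    and A1 :: "(real^'d \<Rightarrow> real) \<Rightarrow> ('w1 \<Rightarrow> real)" and W1 :: "'w1 set" and \<delta>1 :: "'w1 \<Rightarrow> real"
    and \<omega> :: 'a and w0 :: 'w0 and \<beta>lo \<beta>hi :: "real^'k"
  assumes ps: "prob_space M"
    and Y_meas: "Y \<in> borel_measurable M" and X_meas: "X \<in> borel_measurable M"
    and Y_int: "integrable M Y"
    and X_supp: "\<forall>\<omega>'\<in>space M. X \<omega>' \<in> \<X>"
    and iid_meas: "\<forall>i<n. Ys i \<in> borel_measurable M \<and> Xs i \<in> borel_measurable M"
    and iid_indep: "prob_space.indep_vars M (\<lambda>_. borel) (\<lambda>i \<omega>'. (Ys i \<omega>', Xs i \<omega>')) {..<n}"
    and iid_dist: "\<forall>i<n. distr M borel (\<lambda>\<omega>'. (Ys i \<omega>', Xs i \<omega>')) = distr M borel (\<lambda>\<omega>'. (Y \<omega>', X \<omega>'))"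
    and g0_meas: "g0 \<in> borel_measurable borel"
    and g0_ce: "AE \<omega>' in M. g0 (X \<omega>') = real_cond_exp M (vimage_algebra (space M) X borel) Y \<omega>'"
    and A0_lin: "lin_op A0" and A1_lin: "lin_op A1"
    and k2: "CARD('k) \<ge> 2"
    and pp_int: "\<forall>a b. integrable M (\<lambda>\<omega>'. p (X \<omega>') $ a * p (X \<omega>') $ b)"
    and pY_int: "\<forall>a. integrable M (\<lambda>\<omega>'. p (X \<omega>') $ a * Y \<omega>')"
    and G_inv: "invertible (\<chi> a b. prob_space.expectation M (\<lambda>\<omega>'. p (X \<omega>') $ a * p (X \<omega>') $ b))"
    and bias0: "\<forall>w\<in>W0. \<bar>A0 (\<lambda>x. g0 x - p x \<bullet>
        (matrix_inv (\<chi> a b. prob_space.expectation M (\<lambda>\<omega>'. p (X \<omega>') $ a * p (X \<omega>') $ b))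
          *v (\<chi> a. prob_space.expectation M (\<lambda>\<omega>'. p (X \<omega>') $ a * Y \<omega>')))) w\<bar> \<le> \<delta>0 w"
    and bias1: "\<forall>w\<in>W1. \<bar>A1 (\<lambda>x. g0 x - p x \<bullet>
        (matrix_inv (\<chi> a b. prob_space.expectation M (\<lambda>\<omega>'. p (X \<omega>') $ a * p (X \<omega>') $ b))
          *v (\<chi> a. prob_space.expectation M (\<lambda>\<omega>'. p (X \<omega>') $ a * Y \<omega>')))) w\<bar> \<le> \<delta>1 w"
    and alpha: "0 < \<alpha>" "\<alpha> < 1"
    and \<omega>_in: "\<omega> \<in> space M"
    and w0_in: "w0 \<in> W0"
    and lo: "\<beta>lo \<in> feasible n \<alpha> p (\<lambda>i. Ys i \<omega>) (\<lambda>i. Xs i \<omega>) A1 W1 \<delta>1"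
            "\<forall>\<beta>\<in>feasible n \<alpha> p (\<lambda>i. Ys i \<omega>) (\<lambda>i. Xs i \<omega>) A1 W1 \<delta>1.
               A0 (\<lambda>x. p x \<bullet> \<beta>lo) w0 \<le> A0 (\<lambda>x. p x \<bullet> \<beta>) w0"
    and hi: "\<beta>hi \<in> feasible n \<alpha> p (\<lambda>i. Ys i \<omega>) (\<lambda>i. Xs i \<omega>) A1 W1 \<delta>1"
            "\<forall>\<beta>\<in>feasible n \<alpha> p (\<lambda>i. Ys i \<omega>) (\<lambda>i. Xs i \<omega>) A1 W1 \<delta>1.
               A0 (\<lambda>x. p x \<bullet> \<beta>) w0 \<le> A0 (\<lambda>x. p x \<bullet> \<beta>hi) w0"
  shows "(\<lambda>\<theta>. \<theta> w0) ` CR_theta n \<alpha> p (\<lambda>i. Ys i \<omega>) (\<lambda>i. Xs i \<omega>) A0 W0 \<delta>0 A1 W1 \<delta>1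
         = {A0 (\<lambda>x. p x \<bullet> \<beta>lo) w0 - \<delta>0 w0 .. A0 (\<lambda>x. p x \<bullet> \<beta>hi) w0 + \<delta>0 w0}"
proof -
  let ?F = "feasible n \<alpha> p (\<lambda>i. Ys i \<omega>) (\<lambda>i. Xs i \<omega>) A1 W1 \<delta>1"
  let ?f = "\<lambda>\<beta>. A0 (\<lambda>x. p x \<bullet> \<beta>) w0"
  let ?CR = "CR_theta n \<alpha> p (\<lambda>i. Ys i \<omega>) (\<lambda>i. Xs i \<omega>) A0 W0 \<delta>0 A1 W1 \<delta>1"
  have dpos: "\<forall>w\<in>W0. 0 \<le> \<delta>0 w" using bias0 by (meson abs_ge_zero order_trans)
  have d0: "0 \<le> \<delta>0 w0" using dpos w0_in by auto
  have mk: "c \<in> (\<lambda>\<theta>. \<theta> w0) ` ?CR" if b: "\<beta> \<in> ?F" and cb: "\<bar>?f \<beta> - c\<bar> \<le> \<delta>0 w0" for \<beta> c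
  proof -
    let ?\<theta> = "(\<lambda>w. A0 (\<lambda>x. p x \<bullet> \<beta>) w)(w0 := c)"
    have "?\<theta> \<in> ?CR" unfolding CR_theta_def using b cb dpos by auto
    then show ?thesis by (rule image_eqI[rotated]) simp
  qed
  show ?thesis
  proof
    show "(\<lambda>\<theta>. \<theta> w0) ` ?CR \<subseteq> {?f \<beta>lo - \<delta>0 w0 .. ?f \<beta>hi + \<delta>0 w0}"
    proof
      fix c assume "c \<in> (\<lambda>\<theta>. \<theta> w0) ` ?CR"
      then obtain \<theta> \<beta> where c: "c = \<theta> w0" and b: "\<beta> \<in> ?F" and h: "\<forall>w\<in>W0. \<bar>A0 (\<lambda>x. p x \<bullet> \<beta>) w - \<theta> w\<bar> \<le> \<delta>0 w"
        unfolding CR_theta_def by blast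
      have "\<bar>?f \<beta> - c\<bar> \<le> \<delta>0 w0" using h w0_in c by auto
      moreover have "?f \<beta>lo \<le> ?f \<beta>" "?f \<beta> \<le> ?f \<beta>hi" using lo(2) hi(2) b by auto
      ultimately show "c \<in> {?f \<beta>lo - \<delta>0 w0 .. ?f \<beta>hi + \<delta>0 w0}" by auto
    qed
  next
    show "{?f \<beta>lo - \<delta>0 w0 .. ?f \<beta>hi + \<delta>0 w0} \<subseteq> (\<lambda>\<theta>. \<theta> w0) ` ?CR"
    proof
      fix c assume c: "c \<in> {?f \<beta>lo - \<delta>0 w0 .. ?f \<beta>hi + \<delta>0 w0}"
      show "c \<in> (\<lambda>\<theta>. \<theta> w0) ` ?CR"
      proof (cases "c \<le> ?f \<beta>lo + \<delta>0 w0")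
        case True then show ?thesis using c by (intro mk[OF lo(1)]) auto
      next
        case F1: False
        show ?thesis
        proof (cases "?f \<beta>hi - \<delta>0 w0 \<le> c")
          case True then show ?thesis using c by (intro mk[OF hi(1)]) auto
        next
          case False
          define t where "t = (c - ?f \<beta>lo) / (?f \<beta>hi - ?f \<beta>lo)"
          have lt: "?f \<beta>lo < ?f \<beta>hi" using F1 False d0 by auto
          have t01: "0 \<le> t" "t \<le> 1" unfolding t_def using lt F1 False d0
            by (auto simp: divide_simps)
          have "(1-t) *\<^sub>R \<beta>lo + t *\<^sub>R \<beta>hi \<in> ?F"
            by (rule feasible_conv[OF A1_lin t01 lo(1) hi(1)])
          moreover have "?f ((1-t) *\<^sub>R \<beta>lo + t *\<^sub>R \<beta>hi) = c"
            unfolding lin_op_conv[OF A0_lin] t_def using interp_aux[OF lt] .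
          ultimately show ?thesis using d0 by (intro mk) auto
        qed
      qed
    qed
  qed
qed

end
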